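(* Let $X$ be a finite-dimensional real Hilbert space, $I=\{1,\dots,m\}$, and $(U_i)_{i\in I}$ closed convex subsets of $X$ with $\bigcap_{i\in I}\operatorname{ri}U_i\neq\varnothing$. Set $U_{m+1}=U_1$, $T_i=P_{U_{i+1}}R_{U_i}+\mathrm{Id}-P_{U_i}$ for $i\in I$, $Z=\bigcap_{i\in I}\operatorname{Fix}T_i$, and $T=T_mT_{m-1}\cdots T_1$. Then for every $x_0\in X$, the sequence $(T^nx_0)_{n\in\mathbb N}$ converges linearly to a point of $Z$.
   Context: $P_S$ is the metric projection onto a closed convex set $S$, $R_S=2P_S-\mathrm{Id}$, $\operatorname{ri}$ the relative interior. Linear convergence to $\bar x$ means $\|x_n-\bar x\|\le cq^n$ for some $c\ge0$, $q\in[0,1[$. *)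

theory Defs
  imports "HOL-Analysis.Analysis"
begin

definition proj :: "'a::euclidean_space set \<Rightarrow> 'a \<Rightarrow> 'a" where
  "proj S x = closest_point S x"

definition refl_op :: "'a::euclidean_space set \<Rightarrow> 'a \<Rightarrow> 'a" where
  "refl_op S x = 2 *\<^sub>R proj S x - x"

definition Ucyc :: "nat \<Rightarrow> (nat \<Rightarrow> 'a set) \<Rightarrow> nat \<Rightarrow> 'a set" where
  "Ucyc m U i = (if i = m + 1 then U 1 else U i)"

definition T_op :: "nat \<Rightarrow> (nat \<Rightarrow> 'a::euclidean_space set) \<Rightarrow> nat \<Rightarrow> 'a \<Rightarrow> 'a" where
  "T_op m U i x = proj (Ucyc m U (i + 1)) (refl_op (Ucyc m U i) x) + x - proj (Ucyc m U i) x"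

fun T_comp :: "nat \<Rightarrow> (nat \<Rightarrow> 'a::euclidean_space set) \<Rightarrow> nat \<Rightarrow> 'a \<Rightarrow> 'a" where
  "T_comp m U 0 = id"
| "T_comp m U (Suc k) = T_op m U (Suc k) \<circ> T_comp m U k"

definition Fix :: "('a \<Rightarrow> 'a) \<Rightarrow> 'a set" where
  "Fix f = {x. f x = x}"

definition lin_conv :: "(nat \<Rightarrow> 'a::real_normed_vector) \<Rightarrow> 'a \<Rightarrow> bool" where
  "lin_conv xs xbar \<longleftrightarrow> (\<exists>c q. c \<ge> 0 \<and> 0 \<le> q \<and> q < 1 \<and> (\<forall>n. norm (xs n - xbar) \<le> c * q ^ n))"

end

theory Submission
  imports Defs
begin

lemma subspace_reg:
  fixes M :: "'i \<Rightarrow> 'a::euclidean_space set"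
  assumes fin: "finite I" and sub: "\<And>i. i\<in>I \<Longrightarrow> subspace (M i)"
  shows "\<exists>\<mu>\<ge>0. \<forall>v \<delta>. (\<forall>i\<in>I. \<exists>w\<in>M i. norm (v - w) \<le> \<delta>) \<longrightarrow>
            (\<exists>l. (\<forall>i\<in>I. l \<in> M i) \<and> norm (v - l) \<le> \<mu> * \<delta>)"
proof -
  define MM where "MM = {l. \<forall>i\<in>I. l \<in> M i}"
  have subMM: "subspace MM" using sub unfolding MM_def subspace_def by auto
  have spanMM: "span MM = MM" using subMM by (simp add: span_eq_iff)
  define K where "K = sphere (0::'a) 1 \<inter> (\<Inter>w\<in>MM. {z. inner w z = 0})"
  have "closed K" unfolding K_def
    by (intro closed_Int closed_sphere closed_INT ballI closed_hyperplane)
  moreover have "bounded K" unfolding K_def by (simp add: bounded_Int)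
  ultimately have cK: "compact K" by (simp add: compact_eq_bounded_closed)
  define g where "g z = (\<Sum>i\<in>I. infdist z (M i))" for z
  have contg: "continuous_on K g" unfolding g_def
    by (intro continuous_on_sum continuous_on_infdist continuous_on_id)
  have decomp: "\<exists>y z. y \<in> MM \<and> (\<forall>w\<in>MM. inner w z = 0) \<and> v = y + z" for v
  proof -
    obtain y z where "y \<in> span MM" "\<And>w. w \<in> span MM \<Longrightarrow> orthogonal z w" "v = y + z"
      using orthogonal_subspace_decomp_exists[of MM v] by blast
    then show ?thesis using spanMM by (metis orthogonal_def inner_commute)
  qed
  show ?thesis
  proof (cases "K = {}")
    case True
    have "\<forall>v \<delta>. (\<forall>i\<in>I. \<exists>w\<in>M i. norm (v - w) \<le> \<delta>) \<longrightarrow>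
            (\<exists>l. (\<forall>i\<in>I. l \<in> M i) \<and> norm (v - l) \<le> 0 * \<delta>)"
    proof (intro allI impI)
      fix v :: 'a and \<delta> :: real
      obtain y z where yz: "y \<in> MM" "\<forall>w\<in>MM. inner w z = 0" "v = y + z" using decomp by blast
      have "z = 0"
      proof (rule ccontr)
        assume "z \<noteq> 0"
        then have "z /\<^sub>R norm z \<in> K" using yz(2) unfolding K_def by (auto simp: inner_commute)
        then show False using True by auto
      qed
      then show "\<exists>l. (\<forall>i\<in>I. l \<in> M i) \<and> norm (v - l) \<le> 0 * \<delta>"
        using yz unfolding MM_def by auto
    qed
    then show ?thesis by blast
  next
    case False
    then obtain z0 where z0: "z0 \<in> K" "\<And>z. z \<in> K \<Longrightarrow> g z0 \<le> g z"
      using continuous_attains_inf[OF cK False contg] by blast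
    have gpos: "g z0 > 0"
    proof (rule ccontr)
      assume "\<not> g z0 > 0"
      moreover have "g z0 \<ge> 0" unfolding g_def by (simp add: sum_nonneg infdist_nonneg)
      ultimately have "g z0 = 0" by simp
      then have "\<forall>i\<in>I. infdist z0 (M i) = 0" unfolding g_def
        by (simp add: sum_nonneg_eq_0_iff[OF fin] infdist_nonneg)
      then have "\<forall>i\<in>I. z0 \<in> M i"
      proof (intro ballI)
        fix i assume i: "i \<in> I" and h: "\<forall>i\<in>I. infdist z0 (M i) = 0"
        have "closed (M i)" using closed_subspace sub[OF i] by blast
        moreover have "M i \<noteq> {}" using subspace_0[OF sub[OF i]] by auto
        ultimately show "z0 \<in> M i" using in_closed_iff_infdist_zero h i by blast
      qed
      then have "z0 \<in> MM" unfolding MM_def by auto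
      then have "inner z0 z0 = 0" using z0(1) unfolding K_def by auto
      then show False using z0(1) unfolding K_def by auto
    qed
    show ?thesis
    proof (intro exI[of _ "real (card I) / g z0"] conjI allI impI)
      show "0 \<le> real (card I) / g z0" using gpos by simp
      fix v :: 'a and \<delta> :: real
      assume wit: "\<forall>i\<in>I. \<exists>w\<in>M i. norm (v - w) \<le> \<delta>"
      obtain y z where yz: "y \<in> MM" "\<forall>w\<in>MM. inner w z = 0" "v = y + z" using decomp by blast
      show "\<exists>l. (\<forall>i\<in>I. l \<in> M i) \<and> norm (v - l) \<le> real (card I) / g z0 * \<delta>"
      proof (intro exI[of _ y] conjI)
        show "\<forall>i\<in>I. y \<in> M i" using yz unfolding MM_def by auto
        show "norm (v - y) \<le> real (card I) / g z0 * \<delta>"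
        proof (cases "z = 0")
          case True
          have "0 \<le> real (card I) / g z0 * \<delta>"
          proof (cases "I = {}")
            case True then show ?thesis by simp
          next
            case False
            then obtain i where "i \<in> I" by blast
            then have "\<delta> \<ge> 0" using wit norm_ge_zero order_trans by blast
            then show ?thesis using gpos by simp
          qed
          then show ?thesis using True yz by simp
        next
          case False
          let ?z = "z /\<^sub>R norm z"
          have zK: "?z \<in> K" using yz(2) False unfolding K_def by (auto simp: inner_commute)
          have "infdist ?z (M i) \<le> \<delta> / norm z" if iI: "i \<in> I" for i
          proof -
            obtain w where w: "w \<in> M i" "norm (v - w) \<le> \<delta>" using bspec[OF wit iI] by blast
            have yM: "y \<in> M i" using yz(1) iI unfolding MM_def by auto
            have mem: "(w - y) /\<^sub>R norm z \<in> M i"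
              using sub[OF iI] w(1) yM by (simp add: subspace_diff subspace_scale)
            have "infdist ?z (M i) \<le> dist ?z ((w - y) /\<^sub>R norm z)" by (rule infdist_le[OF mem])
            also have "\<dots> = norm (z - (w - y)) / norm z"
              by (simp add: dist_norm divide_inverse mult.commute flip: scaleR_diff_right)
            also have "z - (w - y) = v - w" using yz(3) by simp
            finally show ?thesis using w(2) False by (simp add: divide_right_mono order_trans)
          qed
          then have "g ?z \<le> real (card I) * (\<delta> / norm z)"
            unfolding g_def using sum_mono[of I "\<lambda>i. infdist ?z (M i)" "\<lambda>i. \<delta> / norm z"] by simp
          then have "g z0 \<le> real (card I) * (\<delta> / norm z)" using z0(2)[OF zK] by linarith
          then have "g z0 * norm z \<le> real (card I) * \<delta>" using False by (simp add: field_simps)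
          then have "norm z \<le> real (card I) * \<delta> / g z0" using gpos by (simp add: field_simps)
          then show ?thesis using yz(3) by simp
        qed
      qed
    qed
  qed
qed

lemma set_reg:
  fixes C M :: "'i \<Rightarrow> 'a::euclidean_space set"
  assumes fin: "finite I" and sub: "\<And>i. i\<in>I \<Longrightarrow> subspace (M i)"
    and cvx: "\<And>i. i\<in>I \<Longrightarrow> convex (C i)"
    and inM: "\<And>i x. i\<in>I \<Longrightarrow> x \<in> C i \<Longrightarrow> x - c \<in> M i"
    and r: "r > 0" and ball: "\<And>i v. i\<in>I \<Longrightarrow> v \<in> M i \<Longrightarrow> norm v \<le> r \<Longrightarrow> c + v \<in> C i"
    and R: "R \<ge> 0"
  shows "\<exists>\<kappa>\<ge>0. \<forall>x \<delta>. norm (x - c) \<le> R \<longrightarrow> \<delta> \<ge> 0 \<longrightarrow> (\<forall>i\<in>I. \<exists>a\<in>C i. norm (x - a) \<le> \<delta>) \<longrightarrow>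
            (\<exists>p. (\<forall>i\<in>I. p \<in> C i) \<and> norm (x - p) \<le> \<kappa> * \<delta>)"
proof -
  obtain \<mu> where mu: "\<mu> \<ge> 0" "\<And>v \<delta>. (\<forall>i\<in>I. \<exists>w\<in>M i. norm (v - w) \<le> \<delta>) \<Longrightarrow>
            (\<exists>l. (\<forall>i\<in>I. l \<in> M i) \<and> norm (v - l) \<le> \<mu> * \<delta>)"
    using subspace_reg[of I M, OF fin sub] by blast
  define \<kappa> where "\<kappa> = max 1 (\<mu> + (1+\<mu>)*(R + \<mu>*R)/r)"
  have cC: "c \<in> C i" if "i \<in> I" for i using ball[OF that, of 0] sub[OF that] r by (simp add: subspace_0)
  show ?thesis
  proof (intro exI[of _ \<kappa>] conjI allI impI)
    show "0 \<le> \<kappa>" unfolding \<kappa>_def by simp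
    fix x :: 'a and \<delta> :: real
    assume xc: "norm (x - c) \<le> R" and d0: "\<delta> \<ge> 0" and wit: "\<forall>i\<in>I. \<exists>a\<in>C i. norm (x - a) \<le> \<delta>"
    show "\<exists>p. (\<forall>i\<in>I. p \<in> C i) \<and> norm (x - p) \<le> \<kappa> * \<delta>"
    proof (cases "\<delta> > R")
      case True
      have "\<kappa> \<ge> 1" unfolding \<kappa>_def by simp
      then have "\<delta> \<le> \<kappa> * \<delta>" using mult_right_mono[of 1 \<kappa> \<delta>] d0 by simp
      then show ?thesis using cC xc True by (intro exI[of _ c]) auto
    next
      case False
      have "\<forall>i\<in>I. \<exists>w\<in>M i. norm ((x - c) - w) \<le> \<delta>"
      proof
        fix i assume i: "i \<in> I"
        then obtain a where a: "a \<in> C i" "norm (x - a) \<le> \<delta>" using wit by blast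
        show "\<exists>w\<in>M i. norm ((x - c) - w) \<le> \<delta>"
          using a inM[OF i a(1)] by (intro bexI[of _ "a - c"]) (auto simp: algebra_simps)
      qed
      then obtain l where l: "\<forall>i\<in>I. l \<in> M i" "norm ((x - c) - l) \<le> \<mu> * \<delta>" using mu(2) by blast
      define y where "y = c + l"
      define D where "D = (1 + \<mu>) * \<delta>"
      have D0: "D \<ge> 0" unfolding D_def using mu d0 by simp
      have xy: "norm (x - y) \<le> \<mu> * \<delta>" using l(2) unfolding y_def by (simp add: algebra_simps)
      define p where "p = (r/(r+D)) *\<^sub>R y + (D/(r+D)) *\<^sub>R c"
      have pC: "p \<in> C i" if i: "i \<in> I" for i
      proof -
        obtain a where a: "a \<in> C i" "norm (x - a) \<le> \<delta>" using wit i by blast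
        have ya: "norm (y - a) \<le> D"
        proof -
          have "norm (y - a) \<le> norm (x - y) + norm (x - a)" by (metis norm_diff_triangle_le norm_minus_commute order_refl)
          then show ?thesis using xy a(2) unfolding D_def by (simp add: algebra_simps)
        qed
        show ?thesis
        proof (cases "D = 0")
          case True
          then have "y = a" using ya by simp
          then show ?thesis using True a r unfolding p_def by simp
        next
          case False
          then have Dp: "D > 0" using D0 by simp
          have yaM: "y - a \<in> M i"
          proof -
            have eq: "y - a = l - (a - c)" unfolding y_def by simp
            have "l - (a - c) \<in> M i"
              by (rule subspace_diff[OF sub[OF i]]) (use l(1) i inM[OF i a(1)] in auto)
            then show ?thesis by (simp only: eq)
          qed
          define w where "w = c + (r/D) *\<^sub>R (y - a)"
          have wC: "w \<in> C i" unfolding w_def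
          proof (rule ball[OF i])
            show "(r/D) *\<^sub>R (y - a) \<in> M i" using yaM sub[OF i] by (simp add: subspace_scale)
            have "norm ((r/D) *\<^sub>R (y - a)) = (r/D) * norm (y - a)" using r Dp by simp
            also have "\<dots> \<le> (r/D) * D" using ya r Dp by (intro mult_left_mono) auto
            finally show "norm ((r/D) *\<^sub>R (y - a)) \<le> r" using Dp by simp
          qed
          have "p = (r/(r+D)) *\<^sub>R a + (D/(r+D)) *\<^sub>R w"
          proof -
            have "(D/(r+D)) *\<^sub>R w = (D/(r+D)) *\<^sub>R c + (r/(r+D)) *\<^sub>R (y - a)"
              unfolding w_def using Dp r by (simp add: scaleR_add_right)
            then show ?thesis unfolding p_def by (simp add: algebra_simps)
          qed
          also have "\<dots> \<in> C i"
            using convexD[OF cvx[OF i] a(1) wC, of "r/(r+D)" "D/(r+D)"] r Dp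
            by (simp add: add_divide_distrib[symmetric])
          finally show ?thesis .
        qed
      qed
      have "y - p = (D/(r+D)) *\<^sub>R (y - c)"
      proof -
        have "y = (r/(r+D)) *\<^sub>R y + (D/(r+D)) *\<^sub>R y" using r D0
          by (simp add: scaleR_add_left[symmetric] add_divide_distrib[symmetric])
        then show ?thesis unfolding p_def by (metis (no_types, lifting) add_diff_cancel_left add_diff_eq scaleR_diff_right)
      qed
      then have "norm (y - p) = (D/(r+D)) * norm (y - c)" using r D0 by simp
      also have "\<dots> \<le> (D/r) * (R + \<mu> * R)"
      proof (rule mult_mono)
        show "D/(r+D) \<le> D/r" using r D0 by (simp add: frac_le)
        have "norm (y - c) \<le> norm (x - c) + norm (x - y)"
          by (metis norm_diff_triangle_le norm_minus_commute order_refl)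
        also have "\<dots> \<le> R + \<mu> * R" using xc xy False mu(1) by (smt (verit) mult_left_mono)
        finally show "norm (y - c) \<le> R + \<mu> * R" .
      qed (use r D0 in auto)
      finally have yp: "norm (y - p) \<le> (D/r) * (R + \<mu> * R)" .
      have "norm (x - p) \<le> norm (x - y) + norm (y - p)" by (rule norm_diff_triangle_le) auto
      also have "\<dots> \<le> \<mu> * \<delta> + (D/r) * (R + \<mu> * R)" using xy yp by simp
      also have "\<dots> = (\<mu> + (1+\<mu>)*(R + \<mu>*R)/r) * \<delta>" unfolding D_def by (simp add: field_simps)
      also have "\<dots> \<le> \<kappa> * \<delta>" unfolding \<kappa>_def using d0 by (intro mult_right_mono) auto
      finally show ?thesis using pC by blast
    qed
  qed
qed

lemma proj_facts:
  fixes S :: "'a::euclidean_space set"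
  assumes "closed S" "convex S" "S \<noteq> {}"
  shows proj_in: "proj S x \<in> S"
    and proj_dot: "s \<in> S \<Longrightarrow> inner (x - proj S x) (s - proj S x) \<le> 0"
    and proj_le: "s \<in> S \<Longrightarrow> norm (x - proj S x) \<le> norm (x - s)"
proof -
  show "proj S x \<in> S" by (simp add: proj_def closest_point_in_set assms)
  show "s \<in> S \<Longrightarrow> inner (x - proj S x) (s - proj S x) \<le> 0"
    by (simp add: proj_def closest_point_dot assms)
  show "s \<in> S \<Longrightarrow> norm (x - proj S x) \<le> norm (x - s)"
    using closest_point_le[OF assms(1), of s x] by (simp add: proj_def dist_norm)
qed

lemma proj_char:
  fixes S :: "'a::euclidean_space set"
  assumes "closed S" "convex S" "p \<in> S" "\<And>s. s \<in> S \<Longrightarrow> inner (x - p) (s - p) \<le> 0"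
  shows "proj S x = p"
proof -
  have "\<forall>z\<in>S. dist x p \<le> dist x z"
  proof
    fix z assume z: "z \<in> S"
    have "(norm (x - z))^2 = (norm (x - p))^2 + (norm (p - z))^2 - 2 * inner (x - p) (z - p)"
      unfolding power2_norm_eq_inner by (simp add: inner_diff inner_commute algebra_simps)
    then have "(norm (x - p))^2 \<le> (norm (x - z))^2" using assms(4)[OF z] by (smt (verit) zero_le_power2)
    then show "dist x p \<le> dist x z" by (simp add: dist_norm power2_le_iff_abs_le)
  qed
  then show ?thesis unfolding proj_def using closest_point_unique[OF assms(2,1,3)] by metis
qed

lemma proj_firm:
  fixes S :: "'a::euclidean_space set"
  assumes "closed S" "convex S" "S \<noteq> {}"
  shows "inner (proj S x - proj S y) (proj S x - proj S y) \<le> inner (x - y) (proj S x - proj S y)"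
proof -
  have "inner (x - proj S x) (proj S y - proj S x) \<le> 0"
    and "inner (y - proj S y) (proj S x - proj S y) \<le> 0"
    using proj_dot[OF assms] proj_in[OF assms] by auto
  then show ?thesis by (simp add: inner_diff inner_commute algebra_simps)
qed

lemma dr_alg:
  fixes X da db :: "'a::real_inner"
  assumes h1: "inner da da \<le> inner X da" and h2: "inner db db \<le> inner (2 *\<^sub>R da - X) db"
  shows "(norm (X - da + db))^2 + (norm (da - db))^2 \<le> (norm X)^2"
  using h1 h2 unfolding power2_norm_eq_inner
  by (simp add: inner_diff inner_add inner_commute algebra_simps)

definition DR :: "'a::euclidean_space set \<Rightarrow> 'a set \<Rightarrow> 'a \<Rightarrow> 'a" where
  "DR A B x = x - proj A x + proj B (2 *\<^sub>R proj A x - x)"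

lemma dr_firm:
  fixes A B :: "'a::euclidean_space set"
  assumes A: "closed A" "convex A" "A \<noteq> {}" and B: "closed B" "convex B" "B \<noteq> {}"
  shows "(norm (DR A B x - DR A B y))^2 + (norm ((x - DR A B x) - (y - DR A B y)))^2 \<le> (norm (x - y))^2"
proof -
  let ?a = "proj A x" and ?a' = "proj A y"
  let ?b = "proj B (2 *\<^sub>R ?a - x)" and ?b' = "proj B (2 *\<^sub>R ?a' - y)"
  have h1: "inner (?a - ?a') (?a - ?a') \<le> inner (x - y) (?a - ?a')" by (rule proj_firm[OF A])
  have h2: "inner (?b - ?b') (?b - ?b') \<le> inner ((2 *\<^sub>R ?a - x) - (2 *\<^sub>R ?a' - y)) (?b - ?b')"
    by (rule proj_firm[OF B])
  have e: "(2 *\<^sub>R ?a - x) - (2 *\<^sub>R ?a' - y) = 2 *\<^sub>R (?a - ?a') - (x - y)" by (simp add: algebra_simps)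
  have "(norm ((x - y) - (?a - ?a') + (?b - ?b')))^2 + (norm ((?a - ?a') - (?b - ?b')))^2 \<le> (norm (x - y))^2"
    using dr_alg[OF h1 h2[unfolded e]] .
  moreover have "DR A B x - DR A B y = (x - y) - (?a - ?a') + (?b - ?b')" unfolding DR_def by (simp add: algebra_simps)
  moreover have "(x - DR A B x) - (y - DR A B y) = (?a - ?a') - (?b - ?b')" unfolding DR_def by (simp add: algebra_simps)
  ultimately show ?thesis by simp
qed

definition orth :: "'a::euclidean_space set \<Rightarrow> 'a set" where
  "orth L = {w. \<forall>l\<in>L. inner w l = 0}"

lemma subspace_orth: "subspace (orth L)"
  unfolding orth_def subspace_def by (auto simp: inner_add_left)

lemma orth_approx:
  fixes L :: "'a::euclidean_space set"
  assumes sub: "subspace L" and r: "r > 0"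
    and h: "\<And>s. s \<in> L \<Longrightarrow> norm s \<le> r \<Longrightarrow> inner u s \<le> K"
  shows "\<exists>w\<in>orth L. norm (u - w) \<le> K / r"
proof -
  obtain p q where pq: "p \<in> span L" "\<And>w. w \<in> span L \<Longrightarrow> orthogonal q w" "u = p + q"
    using orthogonal_subspace_decomp_exists[of L u] by blast
  have spL: "span L = L" using sub by (metis span_eq_iff)
  have pL: "p \<in> L" using pq(1) spL by simp
  have qo: "q \<in> orth L" using pq(2) spL unfolding orth_def orthogonal_def by (simp add: inner_commute)
  have "norm p \<le> K / r"
  proof (cases "p = 0")
    case True
    have "inner u 0 \<le> K" using h[of 0] sub r by (simp add: subspace_0)
    then show ?thesis using True r by simp
  next
    case False
    let ?s = "(r / norm p) *\<^sub>R p"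
    have "?s \<in> L" using pL sub by (simp add: subspace_scale)
    moreover have "norm ?s \<le> r" using False r by simp
    ultimately have "inner u ?s \<le> K" using h by blast
    moreover have "inner q p = 0" using pq(2)[OF pq(1)] by (simp add: orthogonal_def)
    then have "inner u ?s = r * norm p" using False
      by (simp add: pq(3) inner_add_left power2_norm_eq_inner[symmetric] power2_eq_square)
    ultimately show ?thesis using r by (simp add: field_simps)
  qed
  then show ?thesis using qo pq(3) by (intro bexI[of _ q]) auto
qed

lemma dr_fix:
  fixes A B :: "'a::euclidean_space set"
  assumes A: "closed A" "convex A" and B: "closed B" "convex B"
    and LA: "\<And>a. a \<in> A \<Longrightarrow> a - c \<in> LA" and LB: "\<And>b. b \<in> B \<Longrightarrow> b - c \<in> LB"
    and subA: "subspace LA" and subB: "subspace LB"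
    and p: "p \<in> A" "p \<in> B" and w: "w \<in> orth LA" "w \<in> orth LB"
  shows "DR A B (p + w) = p + w"
proof -
  have wA: "inner w (s - p) = 0" if "s \<in> A" for s
  proof -
    have "s - p = (s - c) - (p - c)" by simp
    moreover have "inner w (s - c) = 0" "inner w (p - c) = 0"
      using w(1) LA[OF that] LA[OF p(1)] unfolding orth_def by auto
    ultimately show ?thesis by (metis inner_diff_right diff_self)
  qed
  have wB: "inner w (s - p) = 0" if "s \<in> B" for s
  proof -
    have "s - p = (s - c) - (p - c)" by simp
    moreover have "inner w (s - c) = 0" "inner w (p - c) = 0"
      using w(2) LB[OF that] LB[OF p(2)] unfolding orth_def by auto
    ultimately show ?thesis by (metis inner_diff_right diff_self)
  qed
  have pa: "proj A (p + w) = p" by (rule proj_char[OF A p(1)]) (simp add: wA)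
  have e: "2 *\<^sub>R p - (p + w) = p - w" by (simp add: algebra_simps scaleR_2)
  have pb: "proj B (p - w) = p" by (rule proj_char[OF B p(2)]) (simp add: wB)
  show ?thesis unfolding DR_def pa e pb by simp
qed

lemma dr_reg:
  fixes A B :: "'a::euclidean_space set"
  assumes A: "closed A" "convex A" and B: "closed B" "convex B"
    and LA: "\<And>a. a \<in> A \<Longrightarrow> a - c \<in> LA" and LB: "\<And>b. b \<in> B \<Longrightarrow> b - c \<in> LB"
    and subA: "subspace LA" and subB: "subspace LB" and r: "r > 0"
    and ballA: "\<And>v. v \<in> LA \<Longrightarrow> norm v \<le> r \<Longrightarrow> c + v \<in> A"
    and ballB: "\<And>v. v \<in> LB \<Longrightarrow> norm v \<le> r \<Longrightarrow> c + v \<in> B"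
    and R: "R \<ge> 0"
  shows "\<exists>\<kappa>\<ge>0. \<forall>x. norm (x - c) \<le> R \<longrightarrow> (\<exists>p w. p \<in> A \<and> p \<in> B \<and> w \<in> orth LA \<and> w \<in> orth LB \<and>
            norm (x - (p + w)) \<le> \<kappa> * norm (x - DR A B x))"
proof -
  have cA: "c \<in> A" using ballA[of 0] subA r by (simp add: subspace_0)
  have cB: "c \<in> B" using ballB[of 0] subB r by (simp add: subspace_0)
  have Ane: "A \<noteq> {}" and Bne: "B \<noteq> {}" using cA cB by auto
  have sr: "\<exists>\<kappa>\<ge>0. \<forall>x \<delta>. norm (x - c) \<le> R \<longrightarrow> \<delta> \<ge> 0 \<longrightarrow>
        (\<forall>i\<in>(UNIV::bool set). \<exists>a\<in>(if i then A else B). norm (x - a) \<le> \<delta>) \<longrightarrow>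
        (\<exists>p. (\<forall>i\<in>(UNIV::bool set). p \<in> (if i then A else B)) \<and> norm (x - p) \<le> \<kappa> * \<delta>)"
    by (rule set_reg[of "UNIV::bool set" "\<lambda>i. if i then LA else LB" "\<lambda>i. if i then A else B" c r R])
      (use subA subB A B LA LB r ballA ballB R in auto)
  then obtain \<kappa>G where kG: "\<kappa>G \<ge> 0" "\<And>x \<delta>. norm (x - c) \<le> R \<Longrightarrow> \<delta> \<ge> 0 \<Longrightarrow>
        (\<forall>i\<in>(UNIV::bool set). \<exists>a\<in>(if i then A else B). norm (x - a) \<le> \<delta>) \<Longrightarrow>
        (\<exists>p. (\<forall>i\<in>(UNIV::bool set). p \<in> (if i then A else B)) \<and> norm (x - p) \<le> \<kappa>G * \<delta>)"
    by blast
  have srr: "\<exists>\<mu>\<ge>0. \<forall>v \<delta>. (\<forall>i\<in>(UNIV::bool set). \<exists>w\<in>(if i then orth LA else orth LB). norm (v - w) \<le> \<delta>) \<longrightarrow>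
            (\<exists>l. (\<forall>i\<in>(UNIV::bool set). l \<in> (if i then orth LA else orth LB)) \<and> norm (v - l) \<le> \<mu> * \<delta>)"
    by (rule subspace_reg[of "UNIV::bool set" "\<lambda>i. if i then orth LA else orth LB"]) (auto simp: subspace_orth)
  then obtain \<mu> where mu: "\<mu> \<ge> 0" "\<And>v \<delta>. (\<forall>i\<in>(UNIV::bool set). \<exists>w\<in>(if i then orth LA else orth LB). norm (v - w) \<le> \<delta>) \<Longrightarrow>
            (\<exists>l. (\<forall>i\<in>(UNIV::bool set). l \<in> (if i then orth LA else orth LB)) \<and> norm (v - l) \<le> \<mu> * \<delta>)"
    by blast
  define K where "K = 3 * R + r"
  define \<kappa> where "\<kappa> = \<kappa>G + \<mu> * K / r"
  show ?thesis
  proof (intro exI[of _ \<kappa>] conjI allI impI)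
    show "\<kappa> \<ge> 0" unfolding \<kappa>_def K_def using kG mu r R by simp
    fix x :: 'a
    assume xc: "norm (x - c) \<le> R"
    define a where "a = proj A x"
    define b where "b = proj B (2 *\<^sub>R a - x)"
    define e where "e = a - b"
    define u where "u = x - a"
    define \<epsilon> where "\<epsilon> = norm e"
    have aA: "a \<in> A" unfolding a_def by (rule proj_in[OF A Ane])
    have bB: "b \<in> B" unfolding b_def by (rule proj_in[OF B Bne])
    have dx: "x - DR A B x = e" unfolding DR_def e_def a_def b_def by simp
    have h1: "inner u (s - a) \<le> 0" if "s \<in> A" for s
      unfolding u_def a_def by (rule proj_dot[OF A Ane that])
    have h2: "inner (e - u) (s - b) \<le> 0" if "s \<in> B" for s
    proof -
      have "e - u = (2 *\<^sub>R a - x) - b" unfolding e_def u_def by (simp add: algebra_simps scaleR_2)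
      then show ?thesis unfolding b_def using proj_dot[OF B Bne that, of "2 *\<^sub>R a - x"] b_def by simp
    qed
    have nu: "norm u \<le> R" unfolding u_def a_def using proj_le[OF A Ane cA, of x] xc by simp
    have nac: "norm (a - c) \<le> R"
    proof -
      have "dist (closest_point A x) (closest_point A c) \<le> dist x c"
        by (rule closest_point_lipschitz[OF A(2,1) Ane])
      then show ?thesis using xc closest_point_self[OF cA] unfolding a_def proj_def dist_norm by simp
    qed
    have nbc: "norm (b - c) \<le> 2 * R"
    proof -
      have "dist (closest_point B (2 *\<^sub>R a - x)) (closest_point B c) \<le> dist (2 *\<^sub>R a - x) c"
        by (rule closest_point_lipschitz[OF B(2,1) Bne])
      then have "norm (b - c) \<le> norm ((a - c) - u)"
        using closest_point_self[OF cB] unfolding b_def proj_def dist_norm u_def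
        by (simp add: algebra_simps scaleR_2)
      also have "\<dots> \<le> norm (a - c) + norm u" by (rule norm_triangle_ineq4)
      finally show ?thesis using nac nu by simp
    qed
    have ue: "inner u e \<le> \<epsilon> * R"
      unfolding \<epsilon>_def using Cauchy_Schwarz_ineq2[of u e] nu norm_ge_zero
      by (smt (verit, ccfv_SIG) inner_commute mult.commute mult_right_mono)
    have ebc: "inner e (b - c) \<le> \<epsilon> * (2 * R)"
      unfolding \<epsilon>_def using Cauchy_Schwarz_ineq2[of e "b - c"] nbc norm_ge_zero
      by (smt (verit, ccfv_SIG) mult_left_mono)
    have hA: "inner u s \<le> \<epsilon> * K" if s: "s \<in> LA" "norm s \<le> r" for s
    proof -
      have i1: "inner u (c + s - a) \<le> 0" using h1[OF ballA[OF s]] by simp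
      have i2: "inner (e - u) (c - b) \<le> 0" using h2[OF cB] .
      have s1: "inner u s \<le> inner u (a - c)" using i1 by (simp add: inner_diff_right inner_add_right)
      have s2: "inner u (a - c) = inner u e + inner u (b - c)" unfolding e_def
        by (simp add: inner_diff_right)
      have s3: "inner u (b - c) \<le> inner e (b - c)" using i2
        by (simp add: inner_diff_left inner_diff_right)
      have "\<epsilon> * r \<ge> 0" unfolding \<epsilon>_def using r by simp
      moreover have "\<epsilon> * K = \<epsilon> * R + \<epsilon> * (2 * R) + \<epsilon> * r" unfolding K_def by (simp add: algebra_simps)
      ultimately show ?thesis using s1 s2 s3 ue ebc by linarith
    qed
    have hB: "inner u t \<le> \<epsilon> * K" if t: "t \<in> LB" "norm t \<le> r" for t
    proof -
      have mt: "- t \<in> LB" using subB t(1) by (simp add: subspace_neg)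
      have i2: "inner (e - u) (c - t - b) \<le> 0" using h2[OF ballB[OF mt]] t(2) by simp
      have i1: "inner u (c - a) \<le> 0" using h1[OF cA] .
      have t1: "inner u t \<le> inner u (c - b) + inner e (b + t - c)" using i2
        by (simp add: inner_diff_left inner_diff_right inner_add_right algebra_simps)
      have t2: "inner u (c - b) = inner u (c - a) + inner u e" unfolding e_def
        by (simp add: inner_diff_right)
      have t3: "inner e (b + t - c) = inner e (b - c) + inner e t" by (simp add: inner_add_right inner_diff_right)
      have t4: "inner e t \<le> \<epsilon> * r" unfolding \<epsilon>_def using Cauchy_Schwarz_ineq2[of e t] t(2) norm_ge_zero
        by (smt (verit, ccfv_SIG) mult_left_mono)
      have "\<epsilon> * K = \<epsilon> * R + \<epsilon> * (2 * R) + \<epsilon> * r" unfolding K_def by (simp add: algebra_simps)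
      then show ?thesis using t1 t2 t3 t4 ue ebc i1 by linarith
    qed
    obtain wA where wA: "wA \<in> orth LA" "norm (u - wA) \<le> \<epsilon> * K / r" using orth_approx[OF subA r hA] by blast
    obtain wB where wB: "wB \<in> orth LB" "norm (u - wB) \<le> \<epsilon> * K / r" using orth_approx[OF subB r hB] by blast
    obtain w where w: "w \<in> orth LA" "w \<in> orth LB" "norm (u - w) \<le> \<mu> * (\<epsilon> * K / r)"
      using mu(2)[of u "\<epsilon> * K / r"] wA wB by (auto simp: all_bool_eq)
    have "\<exists>p. (\<forall>i\<in>(UNIV::bool set). p \<in> (if i then A else B)) \<and> norm (a - p) \<le> \<kappa>G * \<epsilon>"
      using kG(2)[of a \<epsilon>] nac aA bB unfolding \<epsilon>_def e_def
      by (force simp: all_bool_eq)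
    then obtain p where p: "p \<in> A" "p \<in> B" "norm (a - p) \<le> \<kappa>G * \<epsilon>" by (auto simp: all_bool_eq)
    have "x - (p + w) = (a - p) + (u - w)" unfolding u_def by simp
    then have "norm (x - (p + w)) \<le> norm (a - p) + norm (u - w)" by (metis norm_triangle_ineq)
    also have "\<dots> \<le> \<kappa>G * \<epsilon> + \<mu> * (\<epsilon> * K / r)" using p w by simp
    also have "\<dots> = \<kappa> * norm (x - DR A B x)" unfolding \<kappa>_def dx \<epsilon>_def by (simp add: algebra_simps)
    finally show "\<exists>p w. p \<in> A \<and> p \<in> B \<and> w \<in> orth LA \<and> w \<in> orth LB \<and>
            norm (x - (p + w)) \<le> \<kappa> * norm (x - DR A B x)" using p w by blast
  qed
qed

lemma linconv_abstract:
  fixes T :: "'a::euclidean_space \<Rightarrow> 'a" and S :: "'a \<Rightarrow> real"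
  assumes F: "closed F" "convex F" "F \<noteq> {}" and FZ: "F \<subseteq> Z"
    and S0: "\<And>x. S x \<ge> 0"
    and fejer: "\<And>x z. z \<in> Z \<Longrightarrow> (norm (T x - z))^2 + S x \<le> (norm (x - z))^2"
    and kp: "\<kappa> > 0"
    and reg: "\<And>n. \<exists>p\<in>F. (norm ((T^^n) x0 - p))^2 \<le> \<kappa> * S ((T^^n) x0)"
  shows "\<exists>z\<in>F. lin_conv (\<lambda>n. (T^^n) x0) z"
proof -
  define y where "y n = (T^^n) x0" for n
  have ySuc: "y (Suc n) = T (y n)" for n unfolding y_def by simp
  define d where "d n = norm (y n - proj F (y n))" for n
  have d0: "d n \<ge> 0" for n unfolding d_def by simp
  define \<theta> where "\<theta> = max 0 (1 - 1/\<kappa>)"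
  have th: "0 \<le> \<theta>" "\<theta> < 1" unfolding \<theta>_def using kp by auto
  define q where "q = sqrt \<theta>"
  have q: "0 \<le> q" "q < 1" unfolding q_def using th by (auto simp: real_sqrt_lt_1_iff)
  have fej: "norm (T x - z) \<le> norm (x - z)" if "z \<in> Z" for x z
  proof -
    have "(norm (T x - z))^2 \<le> (norm (x - z))^2" using fejer[OF that, of x] S0[of x] by linarith
    then show ?thesis by (simp add: power2_le_iff_abs_le)
  qed
  have dstep: "d (Suc n) \<le> q * d n" for n
  proof -
    let ?z = "proj F (y n)"
    have zF: "?z \<in> F" by (rule proj_in[OF F(1,2,3)])
    obtain p where p: "p \<in> F" "(norm (y n - p))^2 \<le> \<kappa> * S (y n)" using reg[of n] unfolding y_def by blast
    have "d n \<le> norm (y n - p)" unfolding d_def by (rule proj_le[OF F(1,2,3) p(1)])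
    then have "(d n)^2 \<le> \<kappa> * S (y n)" using p(2) d0 by (smt (verit) power_mono)
    then have Sb: "(d n)^2 / \<kappa> \<le> S (y n)" using kp by (simp add: divide_le_eq mult.commute)
    have "d (Suc n) \<le> norm (y (Suc n) - ?z)" unfolding d_def by (rule proj_le[OF F(1,2,3) zF])
    then have "(d (Suc n))^2 \<le> (norm (y (Suc n) - ?z))^2" using d0 by (simp add: power_mono)
    also have "\<dots> \<le> (d n)^2 - S (y n)" using fejer[of ?z "y n"] zF FZ unfolding ySuc d_def by auto
    also have "\<dots> \<le> (d n)^2 - (d n)^2 / \<kappa>" using Sb by simp
    also have "\<dots> = (1 - 1/\<kappa>) * (d n)^2" by (simp add: algebra_simps)
    also have "\<dots> \<le> \<theta> * (d n)^2" unfolding \<theta>_def by (intro mult_right_mono) auto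
    also have "\<dots> = (q * d n)^2" unfolding q_def using th by (simp add: power_mult_distrib)
    finally show ?thesis using q d0 by (meson mult_nonneg_nonneg power2_le_imp_le)
  qed
  have dgeo: "d n \<le> d 0 * q ^ n" for n
  proof (induction n)
    case (Suc n)
    have "d (Suc n) \<le> q * d n" by (rule dstep)
    also have "\<dots> \<le> q * (d 0 * q ^ n)" using Suc q by (intro mult_left_mono) auto
    finally show ?case by (simp add: algebra_simps)
  qed simp
  have fejk: "norm (y k - proj F (y n)) \<le> d n" if "n \<le> k" for n k
    using that
  proof (induction k rule: dec_induct)
    case base then show ?case unfolding d_def by simp
  next
    case (step k)
    have "proj F (y n) \<in> Z" using proj_in[OF F(1,2,3)] FZ by blast
    then have "norm (y (Suc k) - proj F (y n)) \<le> norm (y k - proj F (y n))" unfolding ySuc by (rule fej)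
    then show ?case using step by simp
  qed
  have yy: "norm (y k - y l) \<le> 2 * (d 0 * q ^ n)" if "n \<le> k" "n \<le> l" for n k l
  proof -
    have "y k - y l = (y k - proj F (y n)) - (y l - proj F (y n))" by simp
    then have "norm (y k - y l) \<le> norm (y k - proj F (y n)) + norm (y l - proj F (y n))"
      by (metis norm_triangle_ineq4)
    also have "\<dots> \<le> 2 * d n" using fejk[OF that(1)] fejk[OF that(2)] by simp
    finally show ?thesis using dgeo[of n] by simp
  qed
  have qlim: "(\<lambda>n. q ^ n) \<longlonglongrightarrow> 0" using q by (intro LIMSEQ_power_zero) simp
  have "Cauchy y"
  proof (rule CauchyI)
    fix e :: real assume e: "0 < e"
    have "(\<lambda>n. 2 * (d 0 * q ^ n)) \<longlonglongrightarrow> 2 * (d 0 * 0)" by (intro tendsto_intros qlim)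
    then obtain N where N: "\<forall>n\<ge>N. norm (2 * (d 0 * q ^ n) - 0) < e" using e unfolding LIMSEQ_iff by auto
    show "\<exists>M. \<forall>m\<ge>M. \<forall>n\<ge>M. norm (y m - y n) < e"
    proof (intro exI[of _ N] allI impI)
      fix k l assume "N \<le> k" "N \<le> l"
      then have "norm (y k - y l) \<le> 2 * (d 0 * q ^ N)" by (rule yy)
      moreover have "2 * (d 0 * q ^ N) < e"
      proof -
        have "norm (2 * (d 0 * q ^ N) - 0) < e" using N by blast
        moreover have "2 * (d 0 * q ^ N) \<ge> 0" using d0[of 0] q by simp
        ultimately show ?thesis by simp
      qed
      ultimately show "norm (y k - y l) < e" by simp
    qed
  qed
  then obtain ys where ys: "y \<longlonglongrightarrow> ys" using Cauchy_convergent_iff convergent_def by blast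
  have ysP: "norm (ys - proj F (y n)) \<le> d n" for n
  proof -
    have "(\<lambda>k. norm (y k - proj F (y n))) \<longlonglongrightarrow> norm (ys - proj F (y n))"
      by (intro tendsto_intros ys)
    then show ?thesis using fejk by (intro LIMSEQ_le_const2) auto
  qed
  have "(\<lambda>n. proj F (y n)) \<longlonglongrightarrow> ys"
  proof -
    have g0: "(\<lambda>n. d 0 * q ^ n) \<longlonglongrightarrow> 0" using tendsto_mult_left[OF qlim, of "d 0"] by simp
    have "(\<lambda>n. norm (proj F (y n) - ys)) \<longlonglongrightarrow> 0"
    proof (rule Lim_null_comparison[OF _ g0])
      show "\<forall>\<^sub>F n in sequentially. norm (norm (proj F (y n) - ys)) \<le> d 0 * q ^ n"
      proof (intro always_eventually allI)
        fix n show "norm (norm (proj F (y n) - ys)) \<le> d 0 * q ^ n"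
          using ysP[of n] dgeo[of n] by (simp add: norm_minus_commute)
      qed
    qed
    then show ?thesis using tendsto_norm_zero_iff LIM_zero_cancel by blast
  qed
  then have ysF: "ys \<in> F"
  proof (rule closed_sequentially[OF F(1), rotated])
    show "proj F (y n) \<in> F" for n by (rule proj_in[OF F(1,2,3)])
  qed
  have "norm (y n - ys) \<le> (2 * d 0) * q ^ n" for n
  proof -
    have "y n - ys = (y n - proj F (y n)) - (ys - proj F (y n))" by simp
    then have "norm (y n - ys) \<le> norm (y n - proj F (y n)) + norm (ys - proj F (y n))"
      by (metis norm_triangle_ineq4)
    also have "\<dots> \<le> 2 * d n" using ysP[of n] unfolding d_def by simp
    finally show ?thesis using dgeo[of n] by simp
  qed
  then have "lin_conv y ys" unfolding lin_conv_def using q d0[of 0] by (intro exI[of _ "2 * d 0"] exI[of _ q]) auto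
  then show ?thesis using ysF unfolding y_def by blast
qed

lemma ri_ball:
  fixes S :: "'a::euclidean_space set"
  assumes "c \<in> rel_interior S"
  shows "\<exists>e>0. \<forall>v \<in> span ((\<lambda>x. x - c) ` S). norm v \<le> e \<longrightarrow> c + v \<in> S"
proof -
  obtain e where cS: "c \<in> S" and e: "e > 0" "ball c e \<inter> affine hull S \<subseteq> S"
    using assms mem_rel_interior_ball by blast
  have "c \<in> affine hull S" using cS by (simp add: hull_inc)
  then have aff: "affine hull S = (\<lambda>x. c + x) ` span ((\<lambda>x. -c + x) ` S)" by (rule affine_hull_span_gen)
  have eq: "(\<lambda>x. -c + x) = (\<lambda>x. x - c)" by auto
  show ?thesis
  proof (intro exI[of _ "e/2"] conjI ballI impI)
    show "e/2 > 0" using e by simp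
    fix v assume v: "v \<in> span ((\<lambda>x. x - c) ` S)" "norm v \<le> e/2"
    have "c + v \<in> affine hull S" using v(1) unfolding aff eq by blast
    moreover have "c + v \<in> ball c e" using v(2) e by (simp add: dist_norm)
    ultimately show "c + v \<in> S" using e(2) by blast
  qed
qed

lemma chain:
  assumes firm: "\<And>i x y. i\<in>{1..m} \<Longrightarrow> (norm (T_op m U i x - T_op m U i y))^2
           + (norm ((x - T_op m U i x) - (y - T_op m U i y)))^2 \<le> (norm (x - y))^2"
    and z: "z \<in> (\<Inter>i\<in>{1..m}. Fix (T_op m U i))" and k: "k \<le> m"
  shows "(norm (T_comp m U k x - z))^2 + (\<Sum>i<k. (norm (T_comp m U i x - T_comp m U (Suc i) x))^2)
          \<le> (norm (x - z))^2"
  using k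
proof (induction k)
  case 0 then show ?case by simp
next
  case (Suc k)
  have i: "Suc k \<in> {1..m}" using Suc.prems by simp
  have zf: "T_op m U (Suc k) z = z" using z i unfolding Fix_def by blast
  have "(norm (T_comp m U (Suc k) x - z))^2 + (norm (T_comp m U k x - T_comp m U (Suc k) x))^2
        \<le> (norm (T_comp m U k x - z))^2"
    using firm[OF i, of "T_comp m U k x" z] zf by simp
  then show ?case using Suc by simp
qed

lemma DR_cont:
  fixes A B :: "'a::euclidean_space set"
  assumes A: "closed A" "convex A" "A \<noteq> {}" and B: "closed B" "convex B" "B \<noteq> {}"
  shows "continuous_on UNIV (DR A B)"
proof -
  have cA: "continuous_on UNIV (proj A)" unfolding proj_def using A
    by (simp add: continuous_on_closest_point)
  have cB: "continuous_on UNIV (proj B)" unfolding proj_def using B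
    by (simp add: continuous_on_closest_point)
  show ?thesis unfolding DR_def
    by (intro continuous_intros continuous_on_compose2[OF cB] cA) auto
qed


theorem corollary8p2:
  fixes U :: "nat \<Rightarrow> 'a::euclidean_space set" and m :: nat and x0 :: 'a
  assumes "m \<ge> 1"
    and "\<And>i. i \<in> {1..m} \<Longrightarrow> closed (U i)"
    and "\<And>i. i \<in> {1..m} \<Longrightarrow> convex (U i)"
    and "(\<Inter>i\<in>{1..m}. rel_interior (U i)) \<noteq> {}"
  shows "\<exists>z \<in> (\<Inter>i\<in>{1..m}. Fix (T_op m U i)).
           lin_conv (\<lambda>n. (T_comp m U m ^^ n) x0) z"
proof -
  define I where "I = {1..m}"
  have finI: "finite I" unfolding I_def by simp
  have Ine: "I \<noteq> {}" unfolding I_def using assms(1) by simp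
  from assms(4) obtain c where cri: "\<And>i. i \<in> I \<Longrightarrow> c \<in> rel_interior (U i)" unfolding I_def by blast
  have cU: "\<And>i. i \<in> I \<Longrightarrow> c \<in> U i" using cri rel_interior_subset by blast
  have clU: "\<And>i. i \<in> I \<Longrightarrow> closed (U i)" and cvU: "\<And>i. i \<in> I \<Longrightarrow> convex (U i)"
    using assms(2,3) unfolding I_def by auto
  have neU: "\<And>i. i \<in> I \<Longrightarrow> U i \<noteq> {}" using cU by blast
  define J where "J i = (if i = m then 1 else Suc i)" for i
  have J: "J i \<in> I" if "i \<in> I" for i using assms(1) that by (auto simp: J_def I_def)
  have Tdr: "T_op m U i = DR (U i) (U (J i))" if "i \<in> I" for i
  proof
    fix x
    have "Ucyc m U i = U i" "Ucyc m U (i + 1) = U (J i)" using that by (auto simp: Ucyc_def J_def I_def)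
    then show "T_op m U i x = DR (U i) (U (J i)) x"
      unfolding T_op_def DR_def refl_op_def by (simp add: algebra_simps)
  qed
  define L where "L i = span ((\<lambda>x. x - c) ` U i)" for i
  have subL: "subspace (L i)" for i unfolding L_def by simp
  have memL: "a - c \<in> L i" if "a \<in> U i" for a i unfolding L_def by (intro span_base imageI that)
  have "\<forall>i\<in>I. \<exists>e>0. \<forall>v\<in>L i. norm v \<le> e \<longrightarrow> c + v \<in> U i"
    using ri_ball cri unfolding L_def by blast
  then obtain e where e: "\<And>i. i \<in> I \<Longrightarrow> e i > 0 \<and> (\<forall>v\<in>L i. norm v \<le> e i \<longrightarrow> c + v \<in> U i)"
    by metis
  define r where "r = Min (e ` I)"
  have r: "r > 0" unfolding r_def using e finI Ine by simp
  have ballU: "c + v \<in> U i" if "i \<in> I" "v \<in> L i" "norm v \<le> r" for i v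
  proof -
    have "r \<le> e i" unfolding r_def using finI that(1) by simp
    then show ?thesis using e[OF that(1)] that by auto
  qed
  define Z where "Z = (\<Inter>i\<in>I. Fix (T_op m U i))"
  have firm: "(norm (T_op m U i x - T_op m U i y))^2
           + (norm ((x - T_op m U i x) - (y - T_op m U i y)))^2 \<le> (norm (x - y))^2"
    if "i \<in> {1..m}" for i x y
  proof -
    have i: "i \<in> I" using that unfolding I_def by simp
    show ?thesis unfolding Tdr[OF i]
      by (rule dr_firm) (use clU cvU neU i J in auto)
  qed
  define R where "R = norm (x0 - c)"
  have R0: "R \<ge> 0" unfolding R_def by simp
  have "\<forall>i\<in>I. \<exists>\<kappa>\<ge>0. \<forall>x. norm (x - c) \<le> R \<longrightarrow> (\<exists>p w. p \<in> U i \<and> p \<in> U (J i) \<and> w \<in> orth (L i) \<and> w \<in> orth (L (J i)) \<and>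
            norm (x - (p + w)) \<le> \<kappa> * norm (x - DR (U i) (U (J i)) x))"
  proof
    fix i assume i: "i \<in> I"
    show "\<exists>\<kappa>\<ge>0. \<forall>x. norm (x - c) \<le> R \<longrightarrow> (\<exists>p w. p \<in> U i \<and> p \<in> U (J i) \<and> w \<in> orth (L i) \<and> w \<in> orth (L (J i)) \<and>
            norm (x - (p + w)) \<le> \<kappa> * norm (x - DR (U i) (U (J i)) x))"
      by (rule dr_reg[OF clU[OF i] cvU[OF i] clU[OF J[OF i]] cvU[OF J[OF i]] memL memL subL subL r
            ballU[OF i] ballU[OF J[OF i]] R0])
  qed
  then obtain kf where kf: "\<And>i. i \<in> I \<Longrightarrow> kf i \<ge> 0 \<and> (\<forall>x. norm (x - c) \<le> R \<longrightarrow> (\<exists>p w. p \<in> U i \<and> p \<in> U (J i) \<and> w \<in> orth (L i) \<and> w \<in> orth (L (J i)) \<and>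
            norm (x - (p + w)) \<le> kf i * norm (x - DR (U i) (U (J i)) x)))"
    by metis
  define K1 where "K1 = (\<Sum>i\<in>I. kf i)"
  have K1: "K1 \<ge> 0" unfolding K1_def using kf by (simp add: sum_nonneg)
  have dreg: "\<exists>p w. p \<in> U i \<and> p \<in> U (J i) \<and> w \<in> orth (L i) \<and> w \<in> orth (L (J i)) \<and>
            norm (x - (p + w)) \<le> K1 * norm (x - T_op m U i x)"
    if i: "i \<in> I" and x: "norm (x - c) \<le> R" for i x
  proof -
    obtain p w where pw: "p \<in> U i" "p \<in> U (J i)" "w \<in> orth (L i)" "w \<in> orth (L (J i))"
      "norm (x - (p + w)) \<le> kf i * norm (x - DR (U i) (U (J i)) x)"
      using kf[OF i] x by blast
    have "kf i \<le> K1" unfolding K1_def using kf finI i by (intro member_le_sum) auto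
    then have "kf i * norm (x - DR (U i) (U (J i)) x) \<le> K1 * norm (x - T_op m U i x)"
      unfolding Tdr[OF i] by (intro mult_right_mono) auto
    then show ?thesis using pw by (intro exI[of _ p] exI[of _ w]) auto
  qed
  define F where "F i = {p + w |p w. p \<in> U i \<inter> U (J i) \<and> w \<in> orth (L i) \<inter> orth (L (J i))}" for i
  define M where "M i = {l + w |l w. l \<in> L i \<inter> L (J i) \<and> w \<in> orth (L i) \<inter> orth (L (J i))}" for i
  have subM: "subspace (M i)" for i unfolding M_def
    by (intro subspace_sums subspace_inter subL subspace_orth)
  have cvF: "convex (F i)" if i: "i \<in> I" for i
  proof -
    have "F i = (\<Union>x\<in>U i \<inter> U (J i). \<Union>y\<in>orth (L i) \<inter> orth (L (J i)). {x + y})"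
      unfolding F_def by auto
    moreover have "convex (U i \<inter> U (J i))" using cvU i J by (intro convex_Int) auto
    moreover have "convex (orth (L i) \<inter> orth (L (J i)))"
      by (intro convex_Int subspace_imp_convex subspace_orth)
    ultimately show ?thesis using convex_sums by metis
  qed
  have FM: "x - c \<in> M i" if i: "i \<in> I" and x: "x \<in> F i" for i x
  proof -
    obtain p w where pw: "x = p + w" "p \<in> U i" "p \<in> U (J i)" "w \<in> orth (L i)" "w \<in> orth (L (J i))"
      using x unfolding F_def by blast
    have "x - c = (p - c) + w" using pw(1) by simp
    then show ?thesis unfolding M_def using pw memL by blast
  qed
  have ballF: "c + v \<in> F i" if i: "i \<in> I" and v: "v \<in> M i" "norm v \<le> r" for i v
  proof -
    obtain l w where lw: "v = l + w" "l \<in> L i" "l \<in> L (J i)" "w \<in> orth (L i)" "w \<in> orth (L (J i))"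
      using v(1) unfolding M_def by blast
    have "orthogonal l w" using lw(2,4) unfolding orth_def orthogonal_def by (simp add: inner_commute)
    then have "(norm v)^2 = (norm l)^2 + (norm w)^2" using lw(1) norm_add_Pythagorean by blast
    then have "(norm l)^2 \<le> (norm v)^2" by simp
    then have "norm l \<le> norm v" by (simp add: power2_le_iff_abs_le)
    then have nl: "norm l \<le> r" using v(2) by simp
    have "c + l \<in> U i" "c + l \<in> U (J i)" using ballU[OF i lw(2) nl] ballU[OF J[OF i] lw(3) nl] by auto
    moreover have "c + v = (c + l) + w" using lw(1) by simp
    ultimately show ?thesis unfolding F_def using lw by blast
  qed
  have "\<exists>\<kappa>\<ge>0. \<forall>x \<delta>. norm (x - c) \<le> R \<longrightarrow> \<delta> \<ge> 0 \<longrightarrow> (\<forall>i\<in>I. \<exists>a\<in>F i. norm (x - a) \<le> \<delta>) \<longrightarrow>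
            (\<exists>p. (\<forall>i\<in>I. p \<in> F i) \<and> norm (x - p) \<le> \<kappa> * \<delta>)"
    by (rule set_reg[OF finI subM cvF FM r ballF R0])
  then obtain \<kappa>2 where k2: "\<kappa>2 \<ge> 0" "\<And>x \<delta>. norm (x - c) \<le> R \<Longrightarrow> \<delta> \<ge> 0 \<Longrightarrow> (\<forall>i\<in>I. \<exists>a\<in>F i. norm (x - a) \<le> \<delta>) \<Longrightarrow>
            (\<exists>p. (\<forall>i\<in>I. p \<in> F i) \<and> norm (x - p) \<le> \<kappa>2 * \<delta>)" by blast
  define F0 where "F0 = (\<Inter>i\<in>I. F i)"
  have F0Z: "F0 \<subseteq> Z"
  proof
    fix x assume x: "x \<in> F0"
    show "x \<in> Z" unfolding Z_def Fix_def
    proof (intro INT_I CollectI)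
      fix i assume i: "i \<in> I"
      obtain p w where pw: "x = p + w" "p \<in> U i" "p \<in> U (J i)" "w \<in> orth (L i)" "w \<in> orth (L (J i))"
        using x i unfolding F0_def F_def by blast
      have "DR (U i) (U (J i)) (p + w) = p + w"
        by (rule dr_fix[OF clU[OF i] cvU[OF i] clU[OF J[OF i]] cvU[OF J[OF i]] memL memL subL subL pw(2-5)])
      then show "T_op m U i x = x" using Tdr[OF i] pw(1) by simp
    qed
  qed
  have clZ: "closed Z" unfolding Z_def Fix_def
  proof (intro closed_INT ballI)
    fix i assume i: "i \<in> I"
    have "continuous_on UNIV (T_op m U i)" unfolding Tdr[OF i]
      by (rule DR_cont) (use clU cvU neU i J in auto)
    then show "closed {x. T_op m U i x = x}"
      using closed_Collect_eq[of "T_op m U i" "\<lambda>x. x"] continuous_on_id by auto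
  qed
  have cF0: "c \<in> F0" unfolding F0_def F_def
  proof (intro INT_I CollectI)
    fix i assume i: "i \<in> I"
    have "0 \<in> orth (L i) \<inter> orth (L (J i))" unfolding orth_def by simp
    then show "\<exists>p w. c = p + w \<and> p \<in> U i \<inter> U (J i) \<and> w \<in> orth (L i) \<inter> orth (L (J i))"
      using cU[OF i] cU[OF J[OF i]] by (intro exI[of _ c] exI[of _ 0]) auto
  qed
  define Ff where "Ff = closure F0"
  have Ff: "closed Ff" "convex Ff" "Ff \<noteq> {}" "Ff \<subseteq> Z"
  proof -
    show "closed Ff" unfolding Ff_def by simp
    have "convex F0" unfolding F0_def by (intro convex_INT cvF)
    then show "convex Ff" unfolding Ff_def by simp
    show "Ff \<noteq> {}" using cF0 closure_subset unfolding Ff_def by blast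
    show "Ff \<subseteq> Z" unfolding Ff_def by (rule closure_minimal[OF F0Z clZ])
  qed
  have cZ: "c \<in> Z" using cF0 F0Z by blast
  define T where "T = T_comp m U m"
  define S where "S x = (\<Sum>i<m. (norm (T_comp m U i x - T_comp m U (Suc i) x))^2)" for x
  have S0: "S x \<ge> 0" for x unfolding S_def by (simp add: sum_nonneg)
  have Zeq: "Z = (\<Inter>i\<in>{1..m}. Fix (T_op m U i))" unfolding Z_def I_def ..
  have chainZ: "(norm (T_comp m U k x - z))^2 + (\<Sum>i<k. (norm (T_comp m U i x - T_comp m U (Suc i) x))^2)
          \<le> (norm (x - z))^2" if "z \<in> Z" "k \<le> m" for z k x
    by (rule chain[OF firm that(1)[unfolded Zeq] that(2)])
  have fejer: "(norm (T x - z))^2 + S x \<le> (norm (x - z))^2" if "z \<in> Z" for x z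
    unfolding T_def S_def by (rule chainZ[OF that order_refl])
  have bnd: "norm (T_comp m U k x - c) \<le> norm (x - c)" if "k \<le> m" for k x
  proof -
    have "(norm (T_comp m U k x - c))^2 \<le> (norm (x - c))^2"
    proof -
      have "0 \<le> (\<Sum>i<k. (norm (T_comp m U i x - T_comp m U (Suc i) x))^2)" by (simp add: sum_nonneg)
      then show ?thesis using chainZ[OF cZ that, of x] by linarith
    qed
    then show ?thesis by (simp add: power2_le_iff_abs_le)
  qed
  have orbit: "norm ((T^^n) x0 - c) \<le> R" for n
  proof (induction n)
    case 0 then show ?case unfolding R_def by simp
  next
    case (Suc n)
    have "norm (T ((T^^n) x0) - c) \<le> norm ((T^^n) x0 - c)" unfolding T_def by (rule bnd) simp
    then show ?case using Suc by simp
  qed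
  define \<kappa> where "\<kappa> = (\<kappa>2 * (real m + K1))^2 + 1"
  have kp: "\<kappa> > 0" unfolding \<kappa>_def by (smt (verit) zero_le_power2)
  have reg: "\<exists>p\<in>Ff. (norm (x - p))^2 \<le> \<kappa> * S x" if x: "norm (x - c) \<le> R" for x
  proof -
    define \<sigma> where "\<sigma> = sqrt (S x)"
    have sig0: "\<sigma> \<ge> 0" unfolding \<sigma>_def using S0 by simp
    have step: "norm (T_comp m U i x - T_comp m U (Suc i) x) \<le> \<sigma>" if "i < m" for i
    proof -
      have "(norm (T_comp m U i x - T_comp m U (Suc i) x))^2 \<le> S x"
        unfolding S_def using that by (intro member_le_sum) auto
      then show ?thesis unfolding \<sigma>_def by (rule real_le_rsqrt)
    qed
    have dist: "norm (x - T_comp m U k x) \<le> real k * \<sigma>" if "k \<le> m" for k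
      using that
    proof (induction k)
      case 0 then show ?case by simp
    next
      case (Suc k)
      have "x - T_comp m U (Suc k) x = (x - T_comp m U k x) + (T_comp m U k x - T_comp m U (Suc k) x)"
        by simp
      then have "norm (x - T_comp m U (Suc k) x) \<le> norm (x - T_comp m U k x) + norm (T_comp m U k x - T_comp m U (Suc k) x)"
        by (metis norm_triangle_ineq)
      also have "\<dots> \<le> real k * \<sigma> + \<sigma>" using Suc step[of k] by simp
      finally show ?case by (simp add: algebra_simps)
    qed
    have wit: "\<forall>i\<in>I. \<exists>a\<in>F i. norm (x - a) \<le> (real m + K1) * \<sigma>"
    proof
      fix i assume i: "i \<in> I"
      then obtain k where k: "i = Suc k" "k < m" unfolding I_def by (cases i) auto
      have xk: "norm (T_comp m U k x - c) \<le> R" using bnd[of k x] k x by simp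
      obtain p w where pw: "p \<in> U i" "p \<in> U (J i)" "w \<in> orth (L i)" "w \<in> orth (L (J i))"
        "norm (T_comp m U k x - (p + w)) \<le> K1 * norm (T_comp m U k x - T_op m U i (T_comp m U k x))"
        using dreg[OF i xk] by blast
      have "T_op m U i (T_comp m U k x) = T_comp m U (Suc k) x" using k by simp
      then have e1: "norm (T_comp m U k x - (p + w)) \<le> K1 * \<sigma>"
        using pw(5) step[OF k(2)] K1 by (metis mult_left_mono order_trans)
      have "x - (p + w) = (x - T_comp m U k x) + (T_comp m U k x - (p + w))" by simp
      then have "norm (x - (p + w)) \<le> norm (x - T_comp m U k x) + norm (T_comp m U k x - (p + w))"
        by (metis norm_triangle_ineq)
      also have "\<dots> \<le> real k * \<sigma> + K1 * \<sigma>" using dist[of k] k e1 by simp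
      also have "\<dots> \<le> (real m + K1) * \<sigma>" using k sig0 by (simp add: algebra_simps mult_left_mono)
      finally show "\<exists>a\<in>F i. norm (x - a) \<le> (real m + K1) * \<sigma>" unfolding F_def using pw by blast
    qed
    obtain p where p: "\<forall>i\<in>I. p \<in> F i" "norm (x - p) \<le> \<kappa>2 * ((real m + K1) * \<sigma>)"
      using k2(2)[OF x _ wit] sig0 K1 by auto
    have pF: "p \<in> Ff" using p(1) closure_subset unfolding Ff_def F0_def by blast
    have "(norm (x - p))^2 \<le> (\<kappa>2 * ((real m + K1) * \<sigma>))^2" using p(2) by (simp add: power_mono)
    also have "\<dots> = (\<kappa>2 * (real m + K1))^2 * S x" unfolding \<sigma>_def using S0
      by (simp add: power_mult_distrib)
    also have "\<dots> \<le> \<kappa> * S x" unfolding \<kappa>_def using S0 by (simp add: mult_right_mono)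
    finally show ?thesis using pF by blast
  qed
  have "\<exists>z\<in>Ff. lin_conv (\<lambda>n. (T^^n) x0) z"
  proof (rule linconv_abstract[OF Ff(1,2,3,4) S0 _ kp])
    show "(norm (T x - z))^2 + S x \<le> (norm (x - z))^2" if "z \<in> Z" for x z by (rule fejer[OF that])
    show "\<exists>p\<in>Ff. (norm ((T^^n) x0 - p))^2 \<le> \<kappa> * S ((T^^n) x0)" for n by (rule reg[OF orbit])
  qed
  then show ?thesis using Ff(4) unfolding Zeq T_def by blast
qed


end
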